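(* Consider the Weakener algorithm (described in the context) for $n \ge 3$ processes $p_0,\dots,p_{n-1}$. If the registers $R_1[j]$, $R_2[j]$, $C_1[j]$ ($j\ge 0$) used by the algorithm are strongly linearizable, then the algorithm terminates even against a strong adversary: with probability 1, all the correct processes reach the return statement (after their for loop); furthermore, they do so within 2 expected rounds.
   Context: Model: an asynchronous shared-memory system of $n\ge 3$ processes $p_0,\dots,p_{n-1}$ that may fail by crashing. A process is correct if it takes infinitely many steps. After returning from the algorithm, a process takes no-op steps forever. A strong adversary is a scheduler that sees the entire history so far, including the results of all coin flips made so far, and chooses adaptively which process takes the next step. A "strongly linearizable register" means an implemented register whose implementation is strongly linearizable. Strong linearizability: a set of histories $\mathcal{H}$ is strongly linearizable if there is a function $f$ from the prefix-closure of $\mathcal{H}$ to sequential histories such that (L) for every $H$ in the prefix-closure, $f(H)$ is a linearization of $H$ (a sequential history consistent with the real-time order of non-overlapping operations of $H$ and with the objects' sequential specifications), and (P) whenever $G$ is a prefix of $H$ (both in the prefix-closure), $f(G)$ is a prefix of $f(H)$. Weakener algorithm. Shared registers, for each $j = 0,1,2,\dots$: $R_1[j]$, a multi-writer multi-reader register initialized to $\bot$; $C_1[j]$, a register written only by $p_0$, initialized to $-1$; $R_2[j]$, a register initialized to $\textsc{false}$. Code of $p_i$ for $i \in \{0,1\}$: for rounds $j=0,1,2,\dots$: (Phase 1) write $i$ into $R_1[j]$; if $i=0$, flip a fair coin (outcome in $\{0,1\}$) and write the outcome into $C_1[j]$; (Phase 2) read $R_2[j]$ into local variable $v_1$; if $v_1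 = \textsc{false}$, exit the for loop. After the loop: return. Code of $p_i$ for $i \in \{2,\dots,n-1\}$: for rounds $j=0,1,2,\dots$: (Phase 1) read $R_1[j]$ into $u_1$; read $R_1[j]$ into $u_2$; read $C_1[j]$ into $c_1$; if $u_1 \ne c_1$ or $u_2 \ne 1-c_1$, exit the for loop; (Phase 2) write $\textsc{true}$ into $R_2[j]$. After the loop: return. *)

theory Defs
  imports "HOL-Probability.Probability"
begin

text \<open>Register operations on the shared registers R1[j], C1[j], R2[j].
  R1 values: None = bottom, Some i = i.  C1 values: int (initially -1).  R2: bool.\<close>

datatype rop = RdR1 nat | WrR1 nat int | RdC1 nat | WrC1 nat int | RdR2 nat | WrR2 nat

datatype rres = ResR1 "int option" | ResC1 int | ResR2 bool | Ack

record shmem =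
  r1 :: "nat \<Rightarrow> int option"
  c1 :: "nat \<Rightarrow> int"
  r2 :: "nat \<Rightarrow> bool"

fun apply_op :: "shmem \<Rightarrow> rop \<Rightarrow> shmem \<times> rres" where
  "apply_op m (RdR1 j) = (m, ResR1 (r1 m j))"
| "apply_op m (WrR1 j v) = (m\<lparr>r1 := (r1 m)(j := Some v)\<rparr>, Ack)"
| "apply_op m (RdC1 j) = (m, ResC1 (c1 m j))"
| "apply_op m (WrC1 j v) = (m\<lparr>c1 := (c1 m)(j := v)\<rparr>, Ack)"
| "apply_op m (RdR2 j) = (m, ResR2 (r2 m j))"
| "apply_op m (WrR2 j) = (m\<lparr>r2 := (r2 m)(j := True)\<rparr>, Ack)"

text \<open>Program counters. p0,p1: W1 (write R1[j]), Flip (p0 only: local coin flip),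
  WC (p0 only: write coin to C1[j]), RR2 (read R2[j]).
  p_i, i>=2: RU1, RU2 (read R1[j] twice), RC (read C1[j] and test), WR2 (write R2[j]).\<close>
datatype pcv = W1 | Flip | WC | RR2 | RU1 | RU2 | RC | WR2 | Ret

text \<open>Local state; pend is the pending register operation (if any) together with
  its result once it has been linearized.\<close>
record lstate =
  pc :: pcv
  rnd :: nat
  u1 :: "int option"
  u2 :: "int option"
  cf :: int
  pend :: "(rop \<times> rres option) option"

record cfg =
  shm :: shmem
  loc :: "nat \<Rightarrow> lstate"

definition cur_op :: "nat \<Rightarrow> lstate \<Rightarrow> rop option" where
  "cur_op i s = (case pc s of
      W1 \<Rightarrow> Some (WrR1 (rnd s) (int i))
    | WC \<Rightarrow> Some (WrC1 (rnd s) (cf s))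
    | RR2 \<Rightarrow> Some (RdR2 (rnd s))
    | RU1 \<Rightarrow> Some (RdR1 (rnd s))
    | RU2 \<Rightarrow> Some (RdR1 (rnd s))
    | RC \<Rightarrow> Some (RdC1 (rnd s))
    | WR2 \<Rightarrow> Some (WrR2 (rnd s))
    | _ \<Rightarrow> None)"

definition after :: "nat \<Rightarrow> lstate \<Rightarrow> rres \<Rightarrow> lstate" where
  "after i s r = (case pc s of
      W1 \<Rightarrow> (if i = 0 then s\<lparr>pc := Flip\<rparr> else s\<lparr>pc := RR2\<rparr>)
    | WC \<Rightarrow> s\<lparr>pc := RR2\<rparr>
    | RR2 \<Rightarrow> (if r = ResR2 False then s\<lparr>pc := Ret\<rparr>
              else s\<lparr>pc := W1, rnd := Suc (rnd s)\<rparr>)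
    | RU1 \<Rightarrow> (case r of ResR1 v \<Rightarrow> s\<lparr>pc := RU2, u1 := v\<rparr> | _ \<Rightarrow> s)
    | RU2 \<Rightarrow> (case r of ResR1 v \<Rightarrow> s\<lparr>pc := RC, u2 := v\<rparr> | _ \<Rightarrow> s)
    | RC \<Rightarrow> (case r of ResC1 c \<Rightarrow>
               (if u1 s \<noteq> Some c \<or> u2 s \<noteq> Some (1 - c) then s\<lparr>pc := Ret\<rparr>
                else s\<lparr>pc := WR2\<rparr>)
             | _ \<Rightarrow> s)
    | WR2 \<Rightarrow> s\<lparr>pc := RU1, rnd := Suc (rnd s)\<rparr>
    | _ \<Rightarrow> s)"

text \<open>A step of process i (b is a fresh fair coin, used only by the coin-flip step).
  A step either invokes the next register operation, or responds to the pending one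
  (linearizing it at that point if the adversary has not linearized it yet),
  or flips the coin, or (after return) is a no-op.\<close>
definition proc_step :: "nat \<Rightarrow> bool \<Rightarrow> cfg \<Rightarrow> cfg" where
  "proc_step i b c = (let s = loc c i in
     case pend s of
       None \<Rightarrow>
         (if pc s = Flip then c\<lparr>loc := (loc c)(i := s\<lparr>pc := WC, cf := (if b then 1 else 0)\<rparr>)\<rparr>
          else (case cur_op i s of
                  None \<Rightarrow> c
                | Some q \<Rightarrow> c\<lparr>loc := (loc c)(i := s\<lparr>pend := Some (q, None)\<rparr>)\<rparr>))
     | Some (q, Some r) \<Rightarrow> c\<lparr>loc := (loc c)(i := after i (s\<lparr>pend := None\<rparr>) r)\<rparr>
     | Some (q, None) \<Rightarrow> (let (m', r) = apply_op (shm c) q in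
          c\<lparr>shm := m', loc := (loc c)(i := after i (s\<lparr>pend := None\<rparr>) r)\<rparr>))"

text \<open>Linearization of the pending operation of process i, chosen online by the adversary
  (strong linearizability: linearization points are fixed irrevocably, as prefixes grow).\<close>
definition lin_step :: "nat \<Rightarrow> cfg \<Rightarrow> cfg" where
  "lin_step i c = (case pend (loc c i) of
       Some (q, None) \<Rightarrow> (let (m', r) = apply_op (shm c) q in
           c\<lparr>shm := m', loc := (loc c)(i := (loc c i)\<lparr>pend := Some (q, Some r)\<rparr>)\<rparr>)
     | _ \<Rightarrow> c)"

datatype action = Step nat | Lin nat

fun act_proc :: "action \<Rightarrow> nat" where
  "act_proc (Step i) = i"
| "act_proc (Lin i) = i"

definition do_act :: "action \<Rightarrow> bool \<Rightarrow> cfg \<Rightarrow> cfg" where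
  "do_act a b c = (case a of Step i \<Rightarrow> proc_step i b c | Lin i \<Rightarrow> lin_step i c)"

definition init_cfg :: cfg where
  "init_cfg = \<lparr>shm = \<lparr>r1 = (\<lambda>_. None), c1 = (\<lambda>_. -1), r2 = (\<lambda>_. False)\<rparr>,
     loc = (\<lambda>i. \<lparr>pc = (if i \<le> 1 then W1 else RU1), rnd = 0, u1 = None, u2 = None,
                  cf = 0, pend = None\<rparr>)\<rparr>"

text \<open>A strong adversary: sees the whole history so far (all configurations, including all
  coin flip outcomes so far) and picks the next action.\<close>
type_synonym adversary = "cfg list \<Rightarrow> action"

fun hist :: "adversary \<Rightarrow> bool stream \<Rightarrow> nat \<Rightarrow> cfg list" where
  "hist A \<omega> 0 = [init_cfg]"
| "hist A \<omega> (Suc t) = (let h = hist A \<omega> t in h @ [do_act (A h) (\<omega> !! t) (last h)])"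

definition config :: "adversary \<Rightarrow> bool stream \<Rightarrow> nat \<Rightarrow> cfg" where
  "config A \<omega> t = last (hist A \<omega> t)"

definition sched :: "adversary \<Rightarrow> bool stream \<Rightarrow> nat \<Rightarrow> action" where
  "sched A \<omega> t = A (hist A \<omega> t)"

definition correct :: "adversary \<Rightarrow> bool stream \<Rightarrow> nat \<Rightarrow> bool" where
  "correct A \<omega> i \<longleftrightarrow> (\<exists>\<^sub>\<infinity> t. sched A \<omega> t = Step i)"

definition returned :: "adversary \<Rightarrow> bool stream \<Rightarrow> nat \<Rightarrow> bool" where
  "returned A \<omega> i \<longleftrightarrow> (\<exists>t. pc (loc (config A \<omega> t) i) = Ret)"

text \<open>Number of rounds of the execution: the largest (1-based) round reached by any process.\<close>
definition rounds :: "nat \<Rightarrow> adversary \<Rightarrow> bool stream \<Rightarrow> ennreal" where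
  "rounds n A \<omega> = (SUP t. SUP i\<in>{..<n}. ennreal (real (Suc (rnd (loc (config A \<omega> t) i)))))"

text \<open>Fair coins, one per time step.\<close>
definition coins :: "bool stream measure" where
  "coins = stream_space (measure_pmf (bernoulli_pmf (1/2)))"

end

theory Submission
  imports Defs
begin

fun cgs :: "(bool list \<Rightarrow> bool option) \<Rightarrow> bool stream \<Rightarrow> nat \<Rightarrow> nat" where
  "cgs G \<omega> 0 = 0"
| "cgs G \<omega> (Suc t) = cgs G \<omega> t + (if G (stake t \<omega>) = None then 0 else 1)"

fun okgs :: "(bool list \<Rightarrow> bool option) \<Rightarrow> nat \<Rightarrow> bool stream \<Rightarrow> nat \<Rightarrow> bool" where
  "okgs G k \<omega> 0 = True"
| "okgs G k \<omega> (Suc t) = (okgs G k \<omega> t \<and> (cgs G \<omega> t < k \<longrightarrow>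
      (case G (stake t \<omega>) of None \<Rightarrow> True | Some b \<Rightarrow> \<omega> !! t = b)))"

definition dG :: "(bool list \<Rightarrow> bool option) \<Rightarrow> nat" where
  "dG G = (if G [] = None then 0 else 1)"

lemma cgs_shift: "cgs G (x ## \<omega>) (Suc t) = dG G + cgs (\<lambda>l. G (x # l)) \<omega> t"
  by (induction t) (auto simp: dG_def)

lemma okgs_shift: "okgs G k (x ## \<omega>) (Suc t) =
   ((0 < k \<longrightarrow> (case G [] of None \<Rightarrow> True | Some b \<Rightarrow> x = b)) \<and> okgs (\<lambda>l. G (x # l)) (k - dG G) \<omega> t)"
proof (induction t)
  case 0
  then show ?case by (auto simp: dG_def split: option.splits)
next
  case (Suc t)
  have e: "(cgs G (x ## \<omega>) (Suc t) < k) = (cgs (\<lambda>l. G (x # l)) \<omega> t < k - dG G)"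
    unfolding cgs_shift by (auto simp: dG_def)
  show ?case
    apply (subst okgs.simps(2))
    apply (subst Suc)
    apply (simp only: e okgs.simps(2) stake.simps snth.simps stream.sel)
    by blast
qed

definition Wg :: "(bool list \<Rightarrow> bool option) \<Rightarrow> nat \<Rightarrow> nat \<Rightarrow> bool stream set" where
  "Wg G k t = {\<omega>. k \<le> cgs G \<omega> t \<and> okgs G k \<omega> t}"

lemma stake_eq_cgs: "stake t \<omega> = stake t \<omega>' \<Longrightarrow> cgs G \<omega> t = cgs G \<omega>' t \<and> okgs G k \<omega> t = okgs G k \<omega>' t"
proof (induction t)
  case 0
  then show ?case by simp
next
  case (Suc t)
  have "stake t \<omega> @ [\<omega> !! t] = stake t \<omega>' @ [\<omega>' !! t]"
    using Suc.prems by (simp only: stake_Suc)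
  then have a: "stake t \<omega> = stake t \<omega>'" and b: "\<omega> !! t = \<omega>' !! t"
    by auto
  show ?case using Suc(1)[OF a] a b by (auto split: option.splits)
qed

lemma sets_coins: "sets coins = sets (stream_space (count_space UNIV))"
  unfolding coins_def by (rule sets_stream_space_cong) simp

lemma space_coins: "space coins = UNIV"
  unfolding coins_def by (simp add: space_stream_space)

lemma stake_meas: "stake t \<in> measurable coins (count_space UNIV)"
  using measurable_stake[where i=t and 'a=bool]
  by (simp add: measurable_def sets_coins space_coins space_stream_space)

lemma prefix_sets:
  assumes "\<And>\<omega> \<omega>'. stake t \<omega> = stake t \<omega>' \<Longrightarrow> \<omega> \<in> S \<Longrightarrow> \<omega>' \<in> S"
  shows "S \<in> sets coins"
proof -
  have "S = stake t -` (stake t ` S) \<inter> space coins"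
  proof (intro equalityI subsetI)
    fix x assume "x \<in> stake t -` (stake t ` S) \<inter> space coins"
    then obtain y where "y \<in> S" "stake t y = stake t x" by auto
    then show "x \<in> S" using assms by blast
  qed (auto simp: space_coins)
  moreover have "stake t -` (stake t ` S) \<inter> space coins \<in> sets coins"
    by (rule measurable_sets[OF stake_meas]) simp
  ultimately show ?thesis by simp
qed

lemma Wg_sets: "Wg G k t \<in> sets coins"
  by (rule prefix_sets[of t]) (auto simp: Wg_def dest: stake_eq_cgs[where G=G and k=k])

lemma prob_coins: "prob_space coins"
  unfolding coins_def
  by (rule prob_space.prob_space_stream_space) (rule prob_space_measure_pmf)

lemma integral_bern:
  fixes f :: "bool \<Rightarrow> ennreal"
  shows "(\<integral>\<^sup>+x. f x \<partial>measure_pmf (bernoulli_pmf (1/2))) = f True / 2 + f False / 2"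
  by (subst nn_integral_measure_pmf_finite) (auto simp: UNIV_bool ennreal_divide_times divide_ennreal_def)

lemma okgs_0[simp]: "okgs G 0 \<omega> t"
  by (induction t) auto

lemma Wg_shift: "{\<omega>. x ## \<omega> \<in> Wg G k (Suc t)} =
  (if 0 < k then (case G [] of None \<Rightarrow> Wg (\<lambda>l. G (x # l)) k t
     | Some b \<Rightarrow> (if x = b then Wg (\<lambda>l. G (x # l)) (k - 1) t else {})) else UNIV)"
  by (simp only: Wg_def mem_Collect_eq cgs_shift okgs_shift) (auto simp: dG_def split: option.splits)

lemma Wg_bound: "emeasure coins (Wg G k t) \<le> (1/2) ^ k"
proof (induction t arbitrary: G k)
  case 0
  interpret prob_space coins by (rule prob_coins)
  have "emeasure coins UNIV = 1" using emeasure_space_1 space_coins by simp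
  then show ?case by (cases k) (auto simp: Wg_def)
next
  case (Suc t)
  interpret P: prob_space coins by (rule prob_coins)
  let ?M = "measure_pmf (bernoulli_pmf (1/2))"
  interpret M: prob_space ?M by (rule prob_space_measure_pmf)
  show ?case
  proof (cases k)
    case 0
    then show ?thesis using P.emeasure_le_1 by simp
  next
    case (Suc k')
    have e: "emeasure coins (Wg G k (Suc t)) =
      (\<integral>\<^sup>+x. emeasure coins {\<omega>. x ## \<omega> \<in> Wg G k (Suc t)} \<partial>?M)"
      using prob_space.emeasure_stream_space[OF prob_space_measure_pmf[of "bernoulli_pmf (1/2)"], where X="Wg G k (Suc t)"] Wg_sets[of G k "Suc t"]
      by (simp add: coins_def[symmetric] space_coins)
    show ?thesis
    proof (cases "G []")
      case None
      have "emeasure coins (Wg G k (Suc t)) \<le> (\<integral>\<^sup>+x. (1/2)^k \<partial>?M)"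
        unfolding e
        using Suc by (intro nn_integral_mono) (simp add: Wg_shift None Suc.IH del: power_Suc)
      also have "\<dots> = (1/2)^k" by (simp add: measure_pmf.emeasure_space_1)
      finally show ?thesis .
    next
      case (Some b)
      have "emeasure coins (Wg G k (Suc t)) \<le> (\<integral>\<^sup>+x. (1/2)^k' * indicator {b} x \<partial>?M)"
        unfolding e
        by (rule nn_integral_mono) (auto simp: Wg_shift Some Suc Suc.IH split: split_indicator)
      also have "\<dots> = (1/2)^k' * emeasure ?M {b}"
        by (simp add: nn_integral_cmult_indicator)
      also have "\<dots> = (1/2)^k" 
        using Suc by (cases b) (simp_all add: emeasure_pmf_single ennreal_power ennreal_mult[symmetric] mult.commute divide_ennreal_def)
      finally show ?thesis .
    qed
  qed
qed

lemma Wg_mono: "\<omega> \<in> Wg G k t \<Longrightarrow> \<omega> \<in> Wg G k (Suc t)"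
  by (auto simp: Wg_def split: option.splits)

lemma Wg_incseq: "incseq (Wg G k)"
  by (rule incseq_SucI) (auto intro: Wg_mono)

lemma UWg_bound: "emeasure coins (\<Union>t. Wg G k t) \<le> (1/2) ^ k"
proof -
  have "emeasure coins (\<Union>t. Wg G k t) = (SUP t. emeasure coins (Wg G k t))"
  proof -
    have "range (Wg G k) \<subseteq> sets coins" using Wg_sets by blast
    from SUP_emeasure_incseq[OF this Wg_incseq] show ?thesis by simp
  qed
  also have "\<dots> \<le> (1/2)^k" by (rule SUP_least) (rule Wg_bound)
  finally show ?thesis .
qed

lemma UWg_sets: "(\<Union>t. Wg G k t) \<in> sets coins"
  using Wg_sets by blast

lemma okgs_iff: "okgs G k \<omega> t \<longleftrightarrow> (\<forall>m<t. cgs G \<omega> m < k \<longrightarrow>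
      (case G (stake m \<omega>) of None \<Rightarrow> True | Some b \<Rightarrow> \<omega> !! m = b))"
  by (induction t) (auto simp: less_Suc_eq)

definition eff :: "nat \<Rightarrow> lstate \<Rightarrow> lstate" where
  "eff i s = (case pend s of Some (q, Some r) \<Rightarrow> after i (s\<lparr>pend := None\<rparr>) r | _ \<Rightarrow> s\<lparr>pend := None\<rparr>)"

definition Ef :: "cfg \<Rightarrow> nat \<Rightarrow> lstate" where
  "Ef c = (\<lambda>i. eff i (loc c i))"

definition wfp :: "nat \<Rightarrow> lstate \<Rightarrow> bool" where
  "wfp i s = ((pc s = Flip \<longrightarrow> i = 0) \<and> (case pend s of None \<Rightarrow> True | Some (q, x) \<Rightarrow> cur_op i s = Some q \<and>
      (case x of None \<Rightarrow> True | Some r \<Rightarrow> (\<exists>m. r = snd (apply_op m q)))))"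

definition WF :: "cfg \<Rightarrow> bool" where
  "WF c = (\<forall>i. wfp i (loc c i))"

lemma after_pend[simp]: "pend (after i s r) = pend s"
  by (auto simp: after_def split: pcv.splits rres.splits)

lemma cur_op_pend[simp]: "cur_op i (s\<lparr>pend := x\<rparr>) = cur_op i s"
  by (cases "pc s") (simp_all add: cur_op_def)

lemma after_pend_upd[simp]: "after i (s\<lparr>pend := x\<rparr>) r = (after i s r)\<lparr>pend := x\<rparr>"
  by (auto simp: after_def split: pcv.splits rres.splits)

lemma after_noflip: "pc (after i s r) = Flip \<Longrightarrow> pc s \<noteq> Flip \<Longrightarrow> i = 0"
  by (auto simp: after_def split: pcv.splits rres.splits if_splits)

lemma after_flip: "pc s = Flip \<Longrightarrow> after i s r = s"
  by (auto simp: after_def)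

lemma cur_op_None: "cur_op i s = None \<longleftrightarrow> pc s = Flip \<or> pc s = Ret"
  by (auto simp: cur_op_def split: pcv.splits)

definition isflip :: "action \<Rightarrow> cfg \<Rightarrow> bool" where
  "isflip a c = (a = Step 0 \<and> pend (loc c 0) = None \<and> pc (loc c 0) = Flip)"

lemma WF_init: "WF init_cfg"
  by (simp add: WF_def wfp_def init_cfg_def)

lemma trans_WF: "WF c \<Longrightarrow> WF (do_act a b c)"
  unfolding WF_def
proof
  fix j assume w: "\<forall>i. wfp i (loc c i)"
  show "wfp j (loc (do_act a b c) j)"
  proof (cases a)
    case (Step i)
    show ?thesis
    proof (cases "j = i")
      case False
      then show ?thesis using w Step
        by (auto simp: do_act_def proc_step_def Let_def split: option.splits prod.splits)
    next
      case True
      have wi: "wfp i (loc c i)" using w by blast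
      show ?thesis
      proof (cases "pend (loc c i)")
        case None
        then show ?thesis using wi Step True
          by (auto simp: do_act_def proc_step_def Let_def wfp_def cur_op_None split: option.splits prod.splits)
      next
        case (Some p)
        then show ?thesis using wi Step True
          by (auto simp: do_act_def proc_step_def Let_def wfp_def cur_op_None split: option.splits prod.splits
             dest: after_noflip)
      qed
    qed
  next
    case (Lin i)
    then show ?thesis using w
      apply (cases "j = i")
       apply (auto simp: do_act_def lin_step_def Let_def wfp_def split: option.splits prod.splits)
      by (metis snd_conv)
  qed
qed

lemma upd_none: "pend s = None \<Longrightarrow> s\<lparr>pend := None\<rparr> = s"
  by (cases s) simp

lemma eff_none: "pend s = None \<Longrightarrow> eff i s = s"
  by (simp add: eff_def upd_none)

definition applyE :: "shmem \<Rightarrow> (nat \<Rightarrow> lstate) \<Rightarrow> nat \<Rightarrow> rop \<Rightarrow> shmem \<times> (nat \<Rightarrow> lstate)" where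
  "applyE m P i q = (fst (apply_op m q), P(i := after i (P i) (snd (apply_op m q))))"

definition flipE :: "(nat \<Rightarrow> lstate) \<Rightarrow> bool \<Rightarrow> nat \<Rightarrow> lstate" where
  "flipE P b = P(0 := (P 0)\<lparr>pc := WC, cf := (if b then 1 else 0)\<rparr>)"

lemma Ef_upd1: "Ef (c\<lparr>shm := m', loc := (loc c)(i := s')\<rparr>) = (Ef c)(i := eff i s')"
  by (auto simp: Ef_def intro!: ext)

lemma Ef_upd2: "Ef (c\<lparr>loc := (loc c)(i := s')\<rparr>) = (Ef c)(i := eff i s')"
  by (auto simp: Ef_def intro!: ext)

lemma trans_E:
  assumes "WF c"
  shows "if isflip a c then shm (do_act a b c) = shm c \<and> Ef (do_act a b c) = flipE (Ef c) b
   else (shm (do_act a b c) = shm c \<and> Ef (do_act a b c) = Ef c) \<or>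
     (\<exists>i q. cur_op i (Ef c i) = Some q \<and> (shm (do_act a b c), Ef (do_act a b c)) = applyE (shm c) (Ef c) i q)"
proof (cases a)
  case (Step i)
  have wi: "wfp i (loc c i)" using assms by (simp add: WF_def)
  show ?thesis
  proof (cases "pend (loc c i)")
    case None
    show ?thesis
    proof (cases "pc (loc c i) = Flip")
      case True
      then have "i = 0" using wi by (simp add: wfp_def)
      then show ?thesis using None True Step
        by (auto simp: isflip_def do_act_def proc_step_def flipE_def Ef_def eff_none intro!: ext)
    next
      case False
      then have nf: "\<not> isflip a c" using Step by (auto simp: isflip_def)
      show ?thesis
      proof (cases "cur_op i (loc c i)")
        case None2: None
        then show ?thesis using None False Step nf
          by (auto simp: do_act_def proc_step_def)
      next
        case (Some q)
        then show ?thesis using None False Step nf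
          by (auto simp: do_act_def proc_step_def Ef_def eff_def intro!: ext)
      qed
    qed
  next
    case (Some p)
    then have nf: "\<not> isflip a c" using Step by (auto simp: isflip_def)
    obtain q x where p: "p = (q, x)" by (cases p)
    show ?thesis
    proof (cases x)
      case None
      then have "cur_op i (Ef c i) = Some q" using wi Some p
        by (simp add: wfp_def Ef_def eff_def)
      moreover have "(shm (do_act a b c), Ef (do_act a b c)) = applyE (shm c) (Ef c) i q"
        using None Some p Step
        by (auto simp: do_act_def proc_step_def Ef_upd1 applyE_def Let_def split: prod.splits)
           (auto simp: Ef_def eff_def upd_none \<open>pend (loc c i) = Some p\<close> p None)
      ultimately show ?thesis unfolding if_not_P[OF nf] by blast
    next
      case (Some r)
      then show ?thesis using \<open>pend (loc c i) = Some p\<close> p Step nf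
        by (auto simp: do_act_def proc_step_def Ef_def eff_def upd_none intro!: ext)
    qed
  qed
next
  case (Lin i)
  have wi: "wfp i (loc c i)" using assms by (simp add: WF_def)
  have nf: "\<not> isflip a c" using Lin by (auto simp: isflip_def)
  show ?thesis
  proof (cases "\<exists>q. pend (loc c i) = Some (q, None)")
    case True
    then obtain q where q: "pend (loc c i) = Some (q, None)" by blast
    then have "cur_op i (Ef c i) = Some q" using wi
      by (simp add: wfp_def Ef_def eff_def)
    moreover have "(shm (do_act a b c), Ef (do_act a b c)) = applyE (shm c) (Ef c) i q"
        using q Lin
        by (auto simp: do_act_def lin_step_def Ef_upd1 applyE_def Let_def split: prod.splits)
           (auto simp: Ef_def eff_def q)
    ultimately show ?thesis unfolding if_not_P[OF nf] by blast
  next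
    case False
    then have "lin_step i c = c"
      by (auto simp: lin_step_def split: option.splits)
    then show ?thesis using Lin nf by (simp add: do_act_def)
  qed
qed

definition ww :: "(nat \<Rightarrow> lstate) \<Rightarrow> nat \<Rightarrow> nat \<Rightarrow> bool" where
  "ww P i j = (j < rnd (P i) \<or> (j = rnd (P i) \<and> pc (P i) \<noteq> W1))"

definition passed :: "shmem \<Rightarrow> (nat \<Rightarrow> lstate) \<Rightarrow> nat \<Rightarrow> bool" where
  "passed m P j = ((\<exists>i. j < rnd (P i)) \<or> (\<exists>i. 2 \<le> i \<and> rnd (P i) = j \<and> pc (P i) = WR2) \<or> r2 m j)"

definition fwstep :: "shmem \<Rightarrow> (nat \<Rightarrow> int option) \<Rightarrow> nat \<Rightarrow> int option" where
  "fwstep m fw = (\<lambda>j. if fw j = None then r1 m j else fw j)"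

definition famset :: "nat \<Rightarrow> pcv set" where
  "famset i = (if i = 0 then {W1, Flip, WC, RR2, Ret}
     else if i = 1 then {W1, RR2, Ret} else {RU1, RU2, RC, WR2, Ret})"

lemma famset_simps: "famset 0 = {W1, Flip, WC, RR2, Ret}" "famset (Suc 0) = {W1, RR2, Ret}"
   "2 \<le> i \<Longrightarrow> famset i = {RU1, RU2, RC, WR2, Ret}"
  by (auto simp: famset_def)

definition inv_fam :: "(nat \<Rightarrow> lstate) \<Rightarrow> bool" where
  "inv_fam P = (\<forall>i. pc (P i) \<in> famset i)"

definition fwok :: "shmem \<Rightarrow> (nat \<Rightarrow> lstate) \<Rightarrow> (nat \<Rightarrow> int option) \<Rightarrow> nat \<Rightarrow> bool" where
  "fwok m P fw j = ((fw j = None \<or> fw j = Some 0 \<or> fw j = Some 1) \<and>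
     (fw j = None \<longleftrightarrow> \<not> ww P 0 j \<and> \<not> ww P 1 j) \<and> (fw j = Some 0 \<longrightarrow> ww P 0 j) \<and>
     (fw j = Some 1 \<longrightarrow> ww P 1 j) \<and>
     r1 m j = (if ww P 0 j \<and> ww P 1 j then map_option (\<lambda>v. 1 - v) (fw j) else fw j))"

definition inv_fw :: "shmem \<Rightarrow> (nat \<Rightarrow> lstate) \<Rightarrow> (nat \<Rightarrow> int option) \<Rightarrow> bool" where
  "inv_fw m P fw = (\<forall>j. fwok m P fw j)"

definition rdok :: "shmem \<Rightarrow> (nat \<Rightarrow> int option) \<Rightarrow> lstate \<Rightarrow> bool" where
  "rdok m fw s = (
     (pc s \<in> {RU2, RC, WR2} \<longrightarrow> (u1 s = None \<or> u1 s = fw (rnd s) \<or> u1 s = r1 m (rnd s))) \<and>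
     (pc s \<in> {RC, WR2} \<longrightarrow> u1 s \<noteq> None \<longrightarrow> u2 s \<noteq> None \<longrightarrow> u1 s \<noteq> u2 s \<longrightarrow> u1 s = fw (rnd s)) \<and>
     (pc s = WR2 \<longrightarrow> u1 s = Some (c1 m (rnd s)) \<and> u2 s = Some (1 - c1 m (rnd s))))"

definition inv_rd :: "shmem \<Rightarrow> (nat \<Rightarrow> lstate) \<Rightarrow> (nat \<Rightarrow> int option) \<Rightarrow> bool" where
  "inv_rd m P fw = (\<forall>i. 2 \<le> i \<longrightarrow> rdok m fw (P i))"

definition inv_c1 :: "shmem \<Rightarrow> (nat \<Rightarrow> lstate) \<Rightarrow> bool" where
  "inv_c1 m P = (\<forall>j. c1 m j \<noteq> -1 \<longrightarrow> j < rnd (P 0) \<or> (j = rnd (P 0) \<and> (pc (P 0) = RR2 \<or> pc (P 0) = Ret)))"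

definition inv_pass :: "shmem \<Rightarrow> (nat \<Rightarrow> lstate) \<Rightarrow> (nat \<Rightarrow> int option) \<Rightarrow> bool" where
  "inv_pass m P fw = (\<forall>j. passed m P j \<longrightarrow> fw j = Some (c1 m j))"

definition Ainv :: "shmem \<Rightarrow> (nat \<Rightarrow> lstate) \<Rightarrow> (nat \<Rightarrow> int option) \<Rightarrow> bool" where
  "Ainv m P fw = (inv_fam P \<and> inv_fw m P fw \<and> inv_rd m P fw \<and> inv_c1 m P \<and> inv_pass m P fw)"

lemma fwstep_id: "inv_fw m P fw \<Longrightarrow> fwstep m fw = fw"
  by (auto simp: fwstep_def inv_fw_def fwok_def intro!: ext)

lemma fw_vals: "inv_fw m P fw \<Longrightarrow> fw j = None \<or> fw j = Some 0 \<or> fw j = Some 1"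
  unfolding inv_fw_def fwok_def by blast

lemma r1_vals: "inv_fw m P fw \<Longrightarrow> r1 m j = None \<or> r1 m j = Some 0 \<or> r1 m j = Some 1"
proof -
  assume a: "inv_fw m P fw"
  then have f: "fwok m P fw j" by (simp add: inv_fw_def)
  show ?thesis using fw_vals[OF a, of j] f unfolding fwok_def by (auto split: if_splits)
qed

lemma u1_vals: "inv_fw m P fw \<Longrightarrow> rdok m fw s \<Longrightarrow> pc s \<in> {RU2, RC, WR2} \<Longrightarrow>
    u1 s = None \<or> u1 s = Some 0 \<or> u1 s = Some 1"
proof -
  assume a: "inv_fw m P fw" "rdok m fw s" "pc s \<in> {RU2, RC, WR2}"
  then have "u1 s = None \<or> u1 s = fw (rnd s) \<or> u1 s = r1 m (rnd s)" unfolding rdok_def by blast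
  then show ?thesis using fw_vals[OF a(1), of "rnd s"] r1_vals[OF a(1), of "rnd s"] by auto
qed

lemma inv_fw_cong: "ww P' 0 = ww P 0 \<Longrightarrow> ww P' 1 = ww P 1 \<Longrightarrow> inv_fw m P' fw = inv_fw m P fw"
  unfolding inv_fw_def fwok_def by (simp only:)

lemma inv_fw_upd: "2 \<le> i \<Longrightarrow> inv_fw m (P(i := s)) fw = inv_fw m P fw"
  by (rule inv_fw_cong) (auto simp: ww_def)

lemma inv_fw_upd01: "i < 2 \<Longrightarrow> ww (P(i := s)) i = ww P i \<Longrightarrow> inv_fw m (P(i := s)) fw = inv_fw m P fw"
  by (rule inv_fw_cong) (auto simp: ww_def less_2_cases_iff)

lemma inv_c1_upd: "0 < i \<Longrightarrow> inv_c1 m (P(i := s)) = inv_c1 m P"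
  by (simp add: inv_c1_def)

lemma inv_fam_upd: "inv_fam P \<Longrightarrow> pc s \<in> famset i \<Longrightarrow> inv_fam (P(i := s))"
  unfolding inv_fam_def by simp

lemma inv_rd_upd: "inv_rd m P fw \<Longrightarrow> rdok m fw s \<Longrightarrow> inv_rd m (P(i := s)) fw"
  unfolding inv_rd_def by simp

lemma inv_rd_upd01: "i < 2 \<Longrightarrow> inv_rd m (P(i := s)) fw = inv_rd m P fw"
  unfolding inv_rd_def by simp

lemma passed_upd: "rnd s = rnd (P i) \<Longrightarrow> (2 \<le> i \<longrightarrow> (pc s = WR2 \<longleftrightarrow> pc (P i) = WR2)) \<Longrightarrow> passed m (P(i := s)) = passed m P"
proof -
  assume a: "rnd s = rnd (P i)" "2 \<le> i \<longrightarrow> (pc s = WR2 \<longleftrightarrow> pc (P i) = WR2)"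
  have h1: "\<And>k. rnd ((P(i:=s)) k) = rnd (P k)" using a by simp
  have h2: "\<And>k. 2 \<le> k \<Longrightarrow> (pc ((P(i:=s)) k) = WR2) = (pc (P k) = WR2)" using a by simp
  show ?thesis unfolding passed_def by (rule ext) (simp add: h1 h2 cong: conj_cong del: fun_upd_apply)
qed

lemma passed_upd_sub:
  assumes "passed m (P(i:=s)) j" "rnd s = rnd (P i)"
  shows "passed m P j \<or> (2 \<le> i \<and> j = rnd s \<and> pc s = WR2)"
proof -
  have "(\<exists>k. j < rnd ((P(i:=s)) k)) \<or> (\<exists>k. 2 \<le> k \<and> rnd ((P(i:=s)) k) = j \<and> pc ((P(i:=s)) k) = WR2) \<or> r2 m j"
    using assms(1) unfolding passed_def .
  then show ?thesis
  proof (elim disjE exE conjE)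
    fix k assume "j < rnd ((P(i:=s)) k)"
    then have "j < rnd (P k)" using assms(2) by (cases "k = i") auto
    then show ?thesis unfolding passed_def by blast
  next
    fix k assume k: "2 \<le> k" "rnd ((P(i:=s)) k) = j" "pc ((P(i:=s)) k) = WR2"
    show ?thesis
    proof (cases "k = i")
      case True then show ?thesis using k by auto
    next
      case False then show ?thesis using k unfolding passed_def by auto
    qed
  next
    assume "r2 m j" then show ?thesis unfolding passed_def by blast
  qed
qed

lemma flipE_simps[simp]:
  "rnd (flipE P b i) = rnd (P i)" "u1 (flipE P b i) = u1 (P i)" "u2 (flipE P b i) = u2 (P i)"
  "pc (flipE P b i) = (if i = 0 then WC else pc (P i))"
  by (simp_all add: flipE_def)

lemma Ainv_flip: "Ainv m P fw \<Longrightarrow> pc (P 0) = Flip \<Longrightarrow> Ainv m (flipE P b) fw"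
proof -
  assume a: "Ainv m P fw" "pc (P 0) = Flip"
  let ?s = "(P 0)\<lparr>pc := WC, cf := (if b then 1 else 0)\<rparr>"
  have e: "flipE P b = P(0 := ?s)" by (simp add: flipE_def)
  show ?thesis unfolding e using a unfolding Ainv_def
    apply (intro conjI)
    subgoal by (auto intro!: inv_fam_upd simp: famset_simps)
    subgoal by (subst inv_fw_upd01) (auto simp: ww_def intro!: ext)
    subgoal by (simp add: inv_rd_upd01)
    subgoal by (simp add: inv_c1_def)
    subgoal by (simp add: inv_pass_def passed_upd)
    done
qed

lemma Ainv_RU1:
  assumes "Ainv m P fw" "pc (P i) = RU1" "2 \<le> i"
  shows "Ainv m (P(i := (P i)\<lparr>pc := RU2, u1 := r1 m (rnd (P i))\<rparr>)) fw"
  using assms unfolding Ainv_def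
  apply (intro conjI)
  subgoal by (auto intro!: inv_fam_upd simp: famset_simps)
  subgoal by (simp add: inv_fw_upd)
  subgoal by (auto intro!: inv_rd_upd simp: rdok_def)
  subgoal by (simp add: inv_c1_upd)
  subgoal by (simp add: inv_pass_def passed_upd)
  done

lemma Ainv_RU2:
  assumes "Ainv m P fw" "pc (P i) = RU2" "2 \<le> i"
  shows "Ainv m (P(i := (P i)\<lparr>pc := RC, u2 := r1 m (rnd (P i))\<rparr>)) fw"
proof -
  have "rdok m fw (P i)" using assms unfolding Ainv_def inv_rd_def by blast
  then show ?thesis
  using assms unfolding Ainv_def
  apply (intro conjI)
  subgoal by (auto intro!: inv_fam_upd simp: famset_simps)
  subgoal by (simp add: inv_fw_upd)
  subgoal by (auto intro!: inv_rd_upd simp: rdok_def)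
  subgoal by (simp add: inv_c1_upd)
  subgoal by (simp add: inv_pass_def passed_upd)
  done
qed

lemma Ainv_RC_fail:
  assumes "Ainv m P fw" "pc (P i) = RC" "2 \<le> i"
  shows "Ainv m (P(i := (P i)\<lparr>pc := Ret\<rparr>)) fw"
  using assms unfolding Ainv_def
  apply (intro conjI)
  subgoal by (auto intro!: inv_fam_upd simp: famset_simps)
  subgoal by (simp add: inv_fw_upd)
  subgoal by (auto intro!: inv_rd_upd simp: rdok_def)
  subgoal by (simp add: inv_c1_upd)
  subgoal by (simp add: inv_pass_def passed_upd)
  done

lemma Ainv_RC_pass:
  assumes "Ainv m P fw" "pc (P i) = RC" "2 \<le> i"
    and u: "u1 (P i) = Some (c1 m (rnd (P i)))" "u2 (P i) = Some (1 - c1 m (rnd (P i)))"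
  shows "Ainv m (P(i := (P i)\<lparr>pc := WR2\<rparr>)) fw"
proof -
  let ?j = "rnd (P i)"
  have rd: "rdok m fw (P i)" using assms unfolding Ainv_def inv_rd_def by blast
  have "c1 m ?j \<noteq> 1 - c1 m ?j" by presburger
  then have ne: "u1 (P i) \<noteq> u2 (P i)" using u by simp
  have "u1 (P i) = fw ?j"
    using rd ne u assms(2) unfolding rdok_def by simp
  then have "fw ?j = Some (c1 m ?j)" using u by simp
  then show ?thesis
  using assms rd unfolding Ainv_def
  apply (intro conjI)
  subgoal by (auto intro!: inv_fam_upd simp: famset_simps)
  subgoal by (simp add: inv_fw_upd)
  subgoal by (auto intro!: inv_rd_upd simp: rdok_def)
  subgoal by (simp add: inv_c1_upd)
  subgoal unfolding inv_pass_def using passed_upd_sub[where s="(P i)\<lparr>pc := WR2\<rparr>" and P=P and i=i and m=m] by auto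
  done
qed


lemma inv_fw_r2[simp]: "inv_fw (m\<lparr>r2 := x\<rparr>) P fw = inv_fw m P fw"
  by (simp add: inv_fw_def fwok_def)

lemma rdok_r2[simp]: "rdok (m\<lparr>r2 := x\<rparr>) fw s = rdok m fw s"
  by (simp add: rdok_def)

lemma inv_rd_r2[simp]: "inv_rd (m\<lparr>r2 := x\<rparr>) P fw = inv_rd m P fw"
  by (simp add: inv_rd_def)

lemma Ainv_WR2:
  assumes "Ainv m P fw" "pc (P i) = WR2" "2 \<le> i"
  shows "Ainv (m\<lparr>r2 := (r2 m)(rnd (P i) := True)\<rparr>) (P(i := (P i)\<lparr>pc := RU1, rnd := Suc (rnd (P i))\<rparr>)) fw"
proof -
  let ?j = "rnd (P i)"
  let ?m = "m\<lparr>r2 := (r2 m)(?j := True)\<rparr>"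
  let ?P = "P(i := (P i)\<lparr>pc := RU1, rnd := Suc ?j\<rparr>)"
  have pp: "passed m P j" if "passed ?m ?P j" for j
  proof -
    have "(\<exists>k. j < rnd (?P k)) \<or> (\<exists>k. 2 \<le> k \<and> rnd (?P k) = j \<and> pc (?P k) = WR2) \<or> r2 ?m j"
      using that unfolding passed_def .
    then show ?thesis
    proof (elim disjE exE conjE)
      fix k assume k: "j < rnd (?P k)"
      show ?thesis
      proof (cases "k = i")
        case True
        then have "j < ?j \<or> j = ?j" using k by auto
        then show ?thesis using assms(2,3) unfolding passed_def by blast
      next
        case False then show ?thesis using k unfolding passed_def by auto
      qed
    next
      fix k assume k: "2 \<le> k" "rnd (?P k) = j" "pc (?P k) = WR2"
      then have "k \<noteq> i" by auto
      then show ?thesis using k unfolding passed_def by auto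
    next
      assume "r2 ?m j"
      then have "r2 m j \<or> j = ?j" by (auto split: if_splits)
      then show ?thesis using assms(2,3) unfolding passed_def by blast
    qed
  qed
  show ?thesis
  using assms unfolding Ainv_def
  apply (intro conjI)
  subgoal by (auto intro!: inv_fam_upd simp: famset_simps)
  subgoal by (simp add: inv_fw_upd)
  subgoal by (auto intro!: inv_rd_upd simp: rdok_def)
  subgoal by (simp add: inv_c1_upd inv_c1_def)
  subgoal unfolding inv_pass_def using pp by simp
  done
qed

lemma Ainv_RR2_fail:
  assumes "Ainv m P fw" "pc (P i) = RR2" "i < 2"
  shows "Ainv m (P(i := (P i)\<lparr>pc := Ret\<rparr>)) fw"
  using assms unfolding Ainv_def
  apply (intro conjI)
  subgoal by (auto intro!: inv_fam_upd simp: famset_simps famset_def)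
  subgoal by (subst inv_fw_upd01) (auto simp: ww_def intro!: ext)
  subgoal by (simp add: inv_rd_upd01)
  subgoal by (auto simp: inv_c1_def)
  subgoal by (simp add: inv_pass_def passed_upd)
  done

lemma Ainv_RR2_go:
  assumes "Ainv m P fw" "pc (P i) = RR2" "i < 2" "r2 m (rnd (P i))"
  shows "Ainv m (P(i := (P i)\<lparr>pc := W1, rnd := Suc (rnd (P i))\<rparr>)) fw"
proof -
  let ?j = "rnd (P i)"
  let ?P = "P(i := (P i)\<lparr>pc := W1, rnd := Suc ?j\<rparr>)"
  have pp: "passed m P j" if "passed m ?P j" for j
  proof -
    have "(\<exists>k. j < rnd (?P k)) \<or> (\<exists>k. 2 \<le> k \<and> rnd (?P k) = j \<and> pc (?P k) = WR2) \<or> r2 m j"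
      using that unfolding passed_def by simp
    then show ?thesis
    proof (elim disjE exE conjE)
      fix k assume k: "j < rnd (?P k)"
      show ?thesis
      proof (cases "k = i")
        case True
        then have "j < ?j \<or> j = ?j" using k by auto
        then show ?thesis using assms(4) unfolding passed_def by blast
      next
        case False then show ?thesis using k unfolding passed_def by auto
      qed
    next
      fix k assume k: "2 \<le> k" "rnd (?P k) = j" "pc (?P k) = WR2"
      then have "k \<noteq> i" using assms(3) by auto
      then show ?thesis using k unfolding passed_def by auto
    next
      assume "r2 m j"
      then show ?thesis unfolding passed_def by blast
    qed
  qed
  show ?thesis
  using assms unfolding Ainv_def
  apply (intro conjI)
  subgoal by (auto intro!: inv_fam_upd simp: famset_simps famset_def)
  subgoal by (subst inv_fw_upd01) (auto simp: ww_def intro!: ext)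
  subgoal by (simp add: inv_rd_upd01)
  subgoal by (auto simp: inv_c1_def)
  subgoal unfolding inv_pass_def using pp by simp
  done
qed


lemma inv_fw_c1[simp]: "inv_fw (m\<lparr>c1 := x\<rparr>) P fw = inv_fw m P fw"
  by (simp add: inv_fw_def fwok_def)

lemma rdok_cong: "(pc s = WR2 \<Longrightarrow> c1 m' (rnd s) = c1 m (rnd s)) \<Longrightarrow> r1 m' = r1 m \<Longrightarrow> rdok m' fw s = rdok m fw s"
  unfolding rdok_def by (cases "pc s = WR2") simp_all

lemma passed_c1[simp]: "passed (m\<lparr>c1 := x\<rparr>) P = passed m P"
  by (rule ext) (simp add: passed_def)

lemma Ainv_WC:
  assumes "Ainv m P fw" "pc (P 0) = WC"
  shows "Ainv (m\<lparr>c1 := (c1 m)(rnd (P 0) := cf (P 0))\<rparr>) (P(0 := (P 0)\<lparr>pc := RR2\<rparr>)) fw"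
proof -
  let ?j = "rnd (P 0)"
  let ?m = "m\<lparr>c1 := (c1 m)(?j := cf (P 0))\<rparr>"
  let ?P = "P(0 := (P 0)\<lparr>pc := RR2\<rparr>)"
  have fw: "inv_fw m P fw" and rd: "inv_rd m P fw" and c1: "inv_c1 m P" and pa: "inv_pass m P fw"
    using assms(1) by (auto simp: Ainv_def)
  have cm: "c1 m ?j = -1" using c1 assms(2) unfolding inv_c1_def by fastforce
  have rd': "rdok ?m fw s" if "rdok m fw s" for s
  proof (cases "rnd s = ?j \<and> pc s = WR2")
    case True
    then have "u1 s = Some (-1)" using that cm unfolding rdok_def by simp
    moreover have "u1 s = None \<or> u1 s = Some 0 \<or> u1 s = Some 1"
      using u1_vals[OF fw that] True by simp
    ultimately show ?thesis by simp
  next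
    case False
    then have "pc s = WR2 \<Longrightarrow> c1 ?m (rnd s) = c1 m (rnd s)" by auto
    moreover have "r1 ?m = r1 m" by simp
    ultimately have "rdok ?m fw s = rdok m fw s" by (rule rdok_cong)
    then show ?thesis using that by simp
  qed
  have np: "\<not> passed m P ?j"
  proof
    assume "passed m P ?j"
    then have "fw ?j = Some (-1)" using pa cm unfolding inv_pass_def by simp
    then show False using fw_vals[OF fw, of ?j] by simp
  qed
  have pe: "passed m ?P = passed m P" by (rule passed_upd) simp_all
  show ?thesis
  unfolding Ainv_def
  apply (intro conjI)
  subgoal using assms(1) unfolding Ainv_def by (intro inv_fam_upd) (simp_all add: famset_simps)
  subgoal using fw by (subst inv_fw_upd01) (auto simp: ww_def assms(2) intro!: ext)
  subgoal using rd rd' unfolding inv_rd_def by simp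
  subgoal using c1 unfolding inv_c1_def by auto
  subgoal unfolding inv_pass_def
  proof (intro allI impI)
    fix j assume "passed ?m ?P j"
    then have "passed m P j" using pe by simp
    moreover from this have "j \<noteq> ?j" using np by auto
    ultimately show "fw j = Some (c1 ?m j)" using pa unfolding inv_pass_def by simp
  qed
  done
qed


lemma rdok_cong2: "r1 m' (rnd s) = r1 m (rnd s) \<Longrightarrow> fw' (rnd s) = fw (rnd s) \<Longrightarrow> c1 m' (rnd s) = c1 m (rnd s) \<Longrightarrow> rdok m' fw' s = rdok m fw s"
  unfolding rdok_def by (simp only:)

lemma passed_r1[simp]: "passed (m\<lparr>r1 := x\<rparr>) P = passed m P"
  by (rule ext) (simp add: passed_def)

lemma Ainv_W1:
  assumes "Ainv m P fw" "pc (P i) = W1" "i < 2"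
  shows "Ainv (m\<lparr>r1 := (r1 m)(rnd (P i) := Some (int i))\<rparr>)
     (P(i := (P i)\<lparr>pc := (if i = 0 then Flip else RR2)\<rparr>))
     (fwstep (m\<lparr>r1 := (r1 m)(rnd (P i) := Some (int i))\<rparr>) fw)"
proof -
  let ?j = "rnd (P i)"
  let ?m = "m\<lparr>r1 := (r1 m)(?j := Some (int i))\<rparr>"
  let ?P = "P(i := (P i)\<lparr>pc := (if i = 0 then Flip else RR2)\<rparr>)"
  let ?fw = "fwstep ?m fw"
  have fw: "inv_fw m P fw" and rd: "inv_rd m P fw" and c1: "inv_c1 m P" and pa: "inv_pass m P fw"
    and fa: "inv_fam P"
    using assms(1) by (auto simp: Ainv_def)
  have nw: "\<not> ww P i ?j" using assms(2) by (simp add: ww_def)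
  have fwj: "fwok m P fw j" for j using fw by (simp add: inv_fw_def)
  have fwN: "fw j = None \<Longrightarrow> r1 m j = None" for j using fwj[of j] unfolding fwok_def by auto
  have fwk: "?fw j = fw j" if "fw j \<noteq> None \<or> j \<noteq> ?j" for j
    using that fwN[of j] by (auto simp: fwstep_def)
  have fwjj: "?fw ?j = (if fw ?j = None then Some (int i) else fw ?j)"
    by (simp add: fwstep_def)
  have r1jj: "r1 m ?j = fw ?j"
    using fwj[of ?j] nw assms(3) unfolding fwok_def by (auto simp: less_2_cases_iff)
  have wwi: "ww ?P i j \<longleftrightarrow> j \<le> ?j" for j by (auto simp: ww_def)
  have wwi0: "ww P i j \<longleftrightarrow> j < ?j" for j using nw by (auto simp: ww_def)
  have wwo: "k \<noteq> i \<Longrightarrow> ww ?P k = ww P k" for k by (auto simp: ww_def intro!: ext)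
  have ifw: "inv_fw ?m ?P ?fw"
    unfolding inv_fw_def
  proof
    fix j
    show "fwok ?m ?P ?fw j"
    proof (cases "j = ?j")
      case False
      have e: "ww ?P k j = ww P k j" for k
        using False by (cases "k = i") (auto simp: wwo wwi wwi0)
      have e2: "r1 ?m j = r1 m j" using False by simp
      have e3: "?fw j = fw j" using False fwk[of j] by simp
      have "fwok ?m ?P ?fw j = fwok m P fw j" unfolding fwok_def by (simp only: e e2 e3)
      then show ?thesis using fwj[of j] by simp
    next
      case True
      have A: "fwok m P fw ?j" by (rule fwj)
      show ?thesis
      proof (cases "i = 0")
        case i0: True
        have e1: "ww ?P 0 ?j" using wwi[of ?j] i0 by simp
        have e2: "ww ?P 1 ?j = ww P 1 ?j" using wwo[of 1] i0 by simp
        have e3: "\<not> ww P 0 ?j" using nw i0 by simp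
        show ?thesis using A e1 e2 e3 True i0 fwjj unfolding fwok_def by (auto split: if_splits)
      next
        case i1: False
        then have i1': "i = 1" using assms(3) by simp
        have e1: "ww ?P 1 ?j" using wwi[of ?j] i1' by simp
        have e2: "ww ?P 0 ?j = ww P 0 ?j" using wwo[of 0] i1' by simp
        have e3: "\<not> ww P 1 ?j" using nw i1' by simp
        show ?thesis using A e1 e2 e3 True i1' fwjj unfolding fwok_def by (auto split: if_splits)
      qed
    qed
  qed
  have rd': "rdok ?m ?fw s" if "rdok m fw s" for s
  proof (cases "rnd s = ?j")
    case False
    then have "r1 ?m (rnd s) = r1 m (rnd s)" "?fw (rnd s) = fw (rnd s)" using fwk by auto
    moreover have "c1 ?m (rnd s) = c1 m (rnd s)" by simp
    ultimately have "rdok ?m ?fw s = rdok m fw s" by (rule rdok_cong2)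
    then show ?thesis using that by simp
  next
    case True
    have R: "rdok m fw s" by (rule that)
    have h1: "u1 s = None \<or> u1 s = ?fw (rnd s)" if "pc s \<in> {RU2, RC, WR2}"
    proof -
      have "u1 s = None \<or> u1 s = fw ?j \<or> u1 s = r1 m ?j"
        using R that True unfolding rdok_def by (metis (no_types, lifting))
      then have "u1 s = None \<or> u1 s = fw ?j" using r1jj by auto
      then show ?thesis using fwk[of ?j] True by (cases "fw ?j") auto
    qed
    have h2: "u1 s = ?fw (rnd s)" if "pc s \<in> {RC, WR2}" "u1 s \<noteq> None" "u2 s \<noteq> None" "u1 s \<noteq> u2 s"
    proof -
      have "u1 s = fw (rnd s)" using R that unfolding rdok_def by blast
      then show ?thesis using fwk[of "rnd s"] that(2) by simp
    qed
    have h3: "u1 s = Some (c1 ?m (rnd s)) \<and> u2 s = Some (1 - c1 ?m (rnd s))" if "pc s = WR2"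
      using R that unfolding rdok_def by simp
    show ?thesis unfolding rdok_def using h1 h2 h3 by blast
  qed
  show ?thesis
  unfolding Ainv_def
  apply (intro conjI)
  subgoal using fa assms(3) by (intro inv_fam_upd) (auto simp: famset_def)
  subgoal by (rule ifw)
  subgoal using rd rd' assms(3) unfolding inv_rd_def by simp
  subgoal using c1 assms(2) unfolding inv_c1_def by auto
  subgoal unfolding inv_pass_def
  proof (intro allI impI)
    fix j assume "passed ?m ?P j"
    moreover have "passed m ?P = passed m P" using assms(3) by (intro passed_upd) auto
    ultimately have "passed m P j" by simp
    then have "fw j = Some (c1 m j)" using pa unfolding inv_pass_def by blast
    then show "?fw j = Some (c1 ?m j)" using fwk[of j] by simp
  qed
  done
qed

lemma fwstep_same: "r1 m' = r1 m \<Longrightarrow> inv_fw m P fw \<Longrightarrow> fwstep m' fw = fw"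
proof -
  assume a: "r1 m' = r1 m" "inv_fw m P fw"
  have "fwstep m' fw = fwstep m fw" unfolding fwstep_def a(1) ..
  then show ?thesis using fwstep_id[OF a(2)] by simp
qed

lemma Ainv_apply:
  assumes A: "Ainv m P fw" and q: "cur_op i (P i) = Some q" and e: "applyE m P i q = (m', P')"
  shows "Ainv m' P' (fwstep m' fw)"
proof -
  have fam: "pc (P i) \<in> famset i" using A by (simp add: Ainv_def inv_fam_def)
  have fw: "inv_fw m P fw" using A by (simp add: Ainv_def)
  let ?j = "rnd (P i)"
  show ?thesis
  proof (cases "pc (P i)")
    case W1
    then have i2: "i < 2" using fam by (auto simp: famset_def split: if_splits)
    have "q = WrR1 ?j (int i)" using q W1 by (simp add: cur_op_def)
    then have "m' = m\<lparr>r1 := (r1 m)(?j := Some (int i))\<rparr>"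
      "P' = P(i := (P i)\<lparr>pc := (if i = 0 then Flip else RR2)\<rparr>)"
      using e W1 by (auto simp: applyE_def after_def)
    then show ?thesis using Ainv_W1[OF A W1 i2] by simp
  next
    case Flip then show ?thesis using q by (simp add: cur_op_def)
  next
    case Ret then show ?thesis using q by (simp add: cur_op_def)
  next
    case WC
    then have i0: "i = 0" using fam by (auto simp: famset_def split: if_splits)
    have "q = WrC1 ?j (cf (P i))" using q WC by (simp add: cur_op_def)
    then have "m' = m\<lparr>c1 := (c1 m)(rnd (P 0) := cf (P 0))\<rparr>"
      "P' = P(0 := (P 0)\<lparr>pc := RR2\<rparr>)"
      using e WC i0 by (auto simp: applyE_def after_def)
    moreover have "fwstep m' fw = fw" using fwstep_same[OF _ fw] calculation by simp
    ultimately show ?thesis using Ainv_WC[OF A] WC i0 by simp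
  next
    case RR2
    then have i2: "i < 2" using fam by (auto simp: famset_def split: if_splits)
    have "q = RdR2 ?j" using q RR2 by (simp add: cur_op_def)
    then have mm: "m' = m" and PP: "P' = P(i := after i (P i) (ResR2 (r2 m ?j)))"
      using e by (auto simp: applyE_def)
    have ff: "fwstep m' fw = fw" using fwstep_same[OF _ fw] mm by simp
    show ?thesis
    proof (cases "r2 m ?j")
      case True
      then have "P' = P(i := (P i)\<lparr>pc := W1, rnd := Suc ?j\<rparr>)" using PP RR2 by (simp add: after_def)
      then show ?thesis using Ainv_RR2_go[OF A RR2 i2 True] mm ff by simp
    next
      case False
      then have "P' = P(i := (P i)\<lparr>pc := Ret\<rparr>)" using PP RR2 by (simp add: after_def)
      then show ?thesis using Ainv_RR2_fail[OF A RR2 i2] mm ff by simp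
    qed
  next
    case RU1
    then have i2: "2 \<le> i" using fam by (auto simp: famset_def split: if_splits)
    have "q = RdR1 ?j" using q RU1 by (simp add: cur_op_def)
    then have mm: "m' = m" and PP: "P' = P(i := (P i)\<lparr>pc := RU2, u1 := r1 m ?j\<rparr>)"
      using e RU1 by (auto simp: applyE_def after_def)
    have ff: "fwstep m' fw = fw" using fwstep_same[OF _ fw] mm by simp
    show ?thesis using Ainv_RU1[OF A RU1 i2] mm ff PP by simp
  next
    case RU2
    then have i2: "2 \<le> i" using fam by (auto simp: famset_def split: if_splits)
    have "q = RdR1 ?j" using q RU2 by (simp add: cur_op_def)
    then have mm: "m' = m" and PP: "P' = P(i := (P i)\<lparr>pc := RC, u2 := r1 m ?j\<rparr>)"
      using e RU2 by (auto simp: applyE_def after_def)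
    have ff: "fwstep m' fw = fw" using fwstep_same[OF _ fw] mm by simp
    show ?thesis using Ainv_RU2[OF A RU2 i2] mm ff PP by simp
  next
    case RC
    then have i2: "2 \<le> i" using fam by (auto simp: famset_def split: if_splits)
    have "q = RdC1 ?j" using q RC by (simp add: cur_op_def)
    then have mm: "m' = m" and PP: "P' = P(i := after i (P i) (ResC1 (c1 m ?j)))"
      using e by (auto simp: applyE_def)
    have ff: "fwstep m' fw = fw" using fwstep_same[OF _ fw] mm by simp
    show ?thesis
    proof (cases "u1 (P i) \<noteq> Some (c1 m ?j) \<or> u2 (P i) \<noteq> Some (1 - c1 m ?j)")
      case True
      then have "P' = P(i := (P i)\<lparr>pc := Ret\<rparr>)" using PP RC by (simp add: after_def)
      then show ?thesis using Ainv_RC_fail[OF A RC i2] mm ff by simp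
    next
      case False
      then have "P' = P(i := (P i)\<lparr>pc := WR2\<rparr>)" using PP RC by (simp add: after_def)
      then show ?thesis using Ainv_RC_pass[OF A RC i2] False mm ff by simp
    qed
  next
    case WR2
    then have i2: "2 \<le> i" using fam by (auto simp: famset_def split: if_splits)
    have "q = WrR2 ?j" using q WR2 by (simp add: cur_op_def)
    then have mm: "m' = m\<lparr>r2 := (r2 m)(?j := True)\<rparr>" and PP: "P' = P(i := (P i)\<lparr>pc := RU1, rnd := Suc ?j\<rparr>)"
      using e WR2 by (auto simp: applyE_def after_def)
    have ff: "fwstep m' fw = fw" using fwstep_same[OF _ fw] mm by simp
    show ?thesis using Ainv_WR2[OF A WR2 i2] mm ff PP by simp
  qed
qed

definition fwh :: "cfg list \<Rightarrow> nat \<Rightarrow> int option" where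
  "fwh h = foldl (\<lambda>a c. fwstep (shm c) a) (\<lambda>_. None) h"

definition fwt :: "adversary \<Rightarrow> bool stream \<Rightarrow> nat \<Rightarrow> nat \<Rightarrow> int option" where
  "fwt A \<omega> t = fwh (hist A \<omega> t)"

lemma hist_Suc': "hist A \<omega> (Suc t) = hist A \<omega> t @ [config A \<omega> (Suc t)]"
  by (simp add: config_def Let_def)

lemma config_Suc: "config A \<omega> (Suc t) = do_act (sched A \<omega> t) (\<omega> !! t) (config A \<omega> t)"
  by (simp add: config_def sched_def Let_def)

lemma config_0: "config A \<omega> 0 = init_cfg"
  by (simp add: config_def)

lemma fwt_Suc: "fwt A \<omega> (Suc t) = fwstep (shm (config A \<omega> (Suc t))) (fwt A \<omega> t)"
  unfolding fwt_def fwh_def by (simp only: hist_Suc' foldl_append) simp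

lemma fwt_0: "fwt A \<omega> 0 = (\<lambda>_. None)"
  by (simp add: fwt_def fwh_def fwstep_def init_cfg_def)

lemma Ef_init: "Ef init_cfg = (\<lambda>i. loc init_cfg i)"
  by (auto simp: Ef_def eff_def init_cfg_def intro!: ext)

lemma Ainv_init: "Ainv (shm init_cfg) (Ef init_cfg) (\<lambda>_. None)"
  unfolding Ainv_def Ef_init
  by (auto simp: inv_fam_def famset_def inv_fw_def fwok_def ww_def inv_rd_def rdok_def
      inv_c1_def inv_pass_def passed_def init_cfg_def)

lemma Ef0_flip: "isflip a c \<Longrightarrow> Ef c 0 = loc c 0"
  by (simp add: isflip_def Ef_def eff_none)

lemma inv_step:
  assumes "WF c" "Ainv (shm c) (Ef c) fw"
  shows "Ainv (shm (do_act a b c)) (Ef (do_act a b c)) (fwstep (shm (do_act a b c)) fw)"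
proof -
  have fw: "inv_fw (shm c) (Ef c) fw" using assms(2) by (simp add: Ainv_def)
  note T = trans_E[OF assms(1), of a b]
  show ?thesis
  proof (cases "isflip a c")
    case True
    then have e: "shm (do_act a b c) = shm c" "Ef (do_act a b c) = flipE (Ef c) b" using T by simp_all
    have "pc (Ef c 0) = Flip" using True Ef0_flip[OF True] by (simp add: isflip_def)
    then show ?thesis using Ainv_flip[OF assms(2)] e fwstep_id[OF fw] by simp
  next
    case False
    then have "(shm (do_act a b c) = shm c \<and> Ef (do_act a b c) = Ef c) \<or>
     (\<exists>i q. cur_op i (Ef c i) = Some q \<and> (shm (do_act a b c), Ef (do_act a b c)) = applyE (shm c) (Ef c) i q)"
      using T by simp
    then show ?thesis
    proof
      assume "shm (do_act a b c) = shm c \<and> Ef (do_act a b c) = Ef c"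
      then show ?thesis using assms(2) fwstep_id[OF fw] by simp
    next
      assume "\<exists>i q. cur_op i (Ef c i) = Some q \<and> (shm (do_act a b c), Ef (do_act a b c)) = applyE (shm c) (Ef c) i q"
      then obtain i q where "cur_op i (Ef c i) = Some q" "applyE (shm c) (Ef c) i q = (shm (do_act a b c), Ef (do_act a b c))"
        by metis
      then show ?thesis using Ainv_apply[OF assms(2)] by blast
    qed
  qed
qed

lemma inv_all: "WF (config A \<omega> t) \<and> Ainv (shm (config A \<omega> t)) (Ef (config A \<omega> t)) (fwt A \<omega> t)"
proof (induction t)
  case 0
  then show ?case using WF_init Ainv_init by (simp add: config_0 fwt_0)
next
  case (Suc t)
  then show ?case using trans_WF inv_step by (simp add: config_Suc fwt_Suc)
qed

definition histL :: "adversary \<Rightarrow> bool list \<Rightarrow> cfg list" where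
  "histL A l = foldl (\<lambda>h b. h @ [do_act (A h) b (last h)]) [init_cfg] l"

definition GA :: "adversary \<Rightarrow> bool list \<Rightarrow> bool option" where
  "GA A l = (let h = histL A l; c = last h in
     if isflip (A h) c then Some (fwh h (rnd (loc c 0)) = Some 1) else None)"

lemma hist_histL: "hist A \<omega> t = histL A (stake t \<omega>)"
proof (induction t)
  case 0
  then show ?case by (simp add: histL_def)
next
  case (Suc t)
  show ?case unfolding stake_Suc histL_def foldl_append
    using Suc by (simp add: histL_def Let_def)
qed

lemma GA_stake: "GA A (stake t \<omega>) = (if isflip (sched A \<omega> t) (config A \<omega> t)
    then Some (fwt A \<omega> t (rnd (loc (config A \<omega> t) 0)) = Some 1) else None)"
  by (simp add: GA_def hist_histL[symmetric] sched_def config_def fwt_def Let_def)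

definition flips :: "lstate \<Rightarrow> nat" where
  "flips s = rnd s + (if pc s = WC \<or> pc s = RR2 \<or> pc s = Ret then 1 else 0)"

lemma flips_apply:
  assumes A: "Ainv m P fw" and q: "cur_op i (P i) = Some q" and e: "applyE m P i q = (m', P')"
  shows "flips (P' 0) = flips (P 0)"
proof (cases "i = 0")
  case False
  then show ?thesis using e by (auto simp: applyE_def)
next
  case True
  have fam: "pc (P 0) \<in> famset 0" using A by (simp add: Ainv_def inv_fam_def)
  have "P' 0 = after 0 (P 0) (snd (apply_op m q))" using e True by (auto simp: applyE_def)
  then show ?thesis using fam q
    by (auto simp: flips_def after_def famset_def cur_op_def split: pcv.splits)
qed

lemma cgs_flips: "cgs (GA A) \<omega> t = flips (Ef (config A \<omega> t) 0)"
proof (induction t)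
  case 0
  then show ?case by (simp add: config_0 Ef_def eff_def init_cfg_def flips_def)
next
  case (Suc t)
  let ?c = "config A \<omega> t"
  have I: "WF ?c" "Ainv (shm ?c) (Ef ?c) (fwt A \<omega> t)" using inv_all by blast+
  note T = trans_E[OF I(1), of "sched A \<omega> t" "\<omega> !! t"]
  show ?case
  proof (cases "isflip (sched A \<omega> t) ?c")
    case True
    then have "Ef (config A \<omega> (Suc t)) = flipE (Ef ?c) (\<omega> !! t)" using T by (simp add: config_Suc)
    moreover have "pc (Ef ?c 0) = Flip" using True Ef0_flip[OF True] by (simp add: isflip_def)
    ultimately show ?thesis using Suc True by (simp add: GA_stake flips_def flipE_def)
  next
    case False
    have "flips (Ef (config A \<omega> (Suc t)) 0) = flips (Ef ?c 0)"
    proof -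
      have "(shm (config A \<omega> (Suc t)) = shm ?c \<and> Ef (config A \<omega> (Suc t)) = Ef ?c) \<or>
       (\<exists>i q. cur_op i (Ef ?c i) = Some q \<and> (shm (config A \<omega> (Suc t)), Ef (config A \<omega> (Suc t))) = applyE (shm ?c) (Ef ?c) i q)"
        using T False by (simp add: config_Suc)
      then show ?thesis
      proof
        assume "\<exists>i q. cur_op i (Ef ?c i) = Some q \<and> (shm (config A \<omega> (Suc t)), Ef (config A \<omega> (Suc t))) = applyE (shm ?c) (Ef ?c) i q"
        then obtain i q where "cur_op i (Ef ?c i) = Some q" "applyE (shm ?c) (Ef ?c) i q = (shm (config A \<omega> (Suc t)), Ef (config A \<omega> (Suc t)))"
          by metis
        then show ?thesis using flips_apply[OF I(2)] by blast
      qed simp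
    qed
    then show ?thesis using Suc False by (simp add: GA_stake)
  qed
qed

definition BAD :: "nat \<Rightarrow> shmem \<Rightarrow> (nat \<Rightarrow> lstate) \<Rightarrow> (nat \<Rightarrow> int option) \<Rightarrow> bool" where
  "BAD j m P fw = ((rnd (P 0) = j \<and> pc (P 0) = WC \<and> cf (P 0) \<noteq> -1 \<and> Some (cf (P 0)) \<noteq> fw j) \<or>
     (c1 m j \<noteq> -1 \<and> Some (c1 m j) \<noteq> fw j))"

lemma fw_notnone: "Ainv m P fw \<Longrightarrow> ww P 0 j \<Longrightarrow> fw j \<noteq> None"
  unfolding Ainv_def inv_fw_def fwok_def by blast

lemma BAD_not_passed: "Ainv m P fw \<Longrightarrow> BAD j m P fw \<Longrightarrow> \<not> passed m P j"
proof
  assume A: "Ainv m P fw" and B: "BAD j m P fw" and p: "passed m P j"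
  have f: "fw j = Some (c1 m j)" using A p by (simp add: Ainv_def inv_pass_def)
  have v: "fw j = None \<or> fw j = Some 0 \<or> fw j = Some 1" using A fw_vals unfolding Ainv_def by blast
  have c: "c1 m j \<noteq> -1 \<longrightarrow> j < rnd (P 0) \<or> (j = rnd (P 0) \<and> (pc (P 0) = RR2 \<or> pc (P 0) = Ret))"
    using A by (simp add: Ainv_def inv_c1_def)
  show False using B f v c unfolding BAD_def by auto
qed

lemma applyE_c1:
  assumes A: "Ainv m P fw" and q: "cur_op i (P i) = Some q" and e: "applyE m P i q = (m', P')"
  shows "c1 m' = (if pc (P i) = WC then (c1 m)(rnd (P i) := cf (P i)) else c1 m)"
  using q e by (auto simp: applyE_def cur_op_def split: pcv.splits)

lemma BAD_apply:
  assumes A: "Ainv m P fw" and q: "cur_op i (P i) = Some q" and e: "applyE m P i q = (m', P')"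
    and B: "BAD j m P fw"
  shows "BAD j m' P' (fwstep m' fw)"
proof -
  have fam: "pc (P i) \<in> famset i" using A by (simp add: Ainv_def inv_fam_def)
  have c: "c1 m j \<noteq> -1 \<longrightarrow> j < rnd (P 0) \<or> (j = rnd (P 0) \<and> (pc (P 0) = RR2 \<or> pc (P 0) = Ret))"
    using A by (simp add: Ainv_def inv_c1_def)
  have fwe: "fw j \<noteq> None \<Longrightarrow> fwstep m' fw j = fw j" unfolding fwstep_def by (cases "fw j") auto
  have wci: "pc (P i) = WC \<Longrightarrow> i = 0" using fam by (auto simp: famset_def split: if_splits)
  have C: "c1 m' = (if pc (P i) = WC then (c1 m)(rnd (P i) := cf (P i)) else c1 m)"
    by (rule applyE_c1[OF A q e])
  have P0: "i \<noteq> 0 \<Longrightarrow> P' 0 = P 0" using e by (auto simp: applyE_def)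
  show ?thesis
  proof (cases "rnd (P 0) = j \<and> pc (P 0) = WC \<and> cf (P 0) \<noteq> -1 \<and> Some (cf (P 0)) \<noteq> fw j")
    case True
    then have "ww P 0 j" by (simp add: ww_def)
    then have fj: "fwstep m' fw j = fw j" using fw_notnone[OF A] fwe by blast
    show ?thesis
    proof (cases "i = 0")
      case True
      then have "c1 m' j = cf (P 0)" using C \<open>rnd (P 0) = j \<and> pc (P 0) = WC \<and> cf (P 0) \<noteq> -1 \<and> Some (cf (P 0)) \<noteq> fw j\<close> by simp
      then show ?thesis using fj \<open>rnd (P 0) = j \<and> pc (P 0) = WC \<and> cf (P 0) \<noteq> -1 \<and> Some (cf (P 0)) \<noteq> fw j\<close>
        unfolding BAD_def by simp
    next
      case False
      then show ?thesis using fj P0 True unfolding BAD_def by simp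
    qed
  next
    case False
    then have b2: "c1 m j \<noteq> -1" "Some (c1 m j) \<noteq> fw j" using B unfolding BAD_def by blast+
    then have cj: "j < rnd (P 0) \<or> (j = rnd (P 0) \<and> (pc (P 0) = RR2 \<or> pc (P 0) = Ret))" using c by blast
    then have "ww P 0 j" by (auto simp: ww_def)
    then have fj: "fwstep m' fw j = fw j" using fw_notnone[OF A] fwe by blast
    have "c1 m' j = c1 m j"
    proof (cases "pc (P i) = WC")
      case True
      then have "i = 0" by (rule wci)
      then have "rnd (P i) \<noteq> j" using cj True by auto
      then show ?thesis using C by simp
    qed (simp add: C)
    then show ?thesis using b2 fj unfolding BAD_def by simp
  qed
qed

lemma BAD_step:
  assumes "WF c" "Ainv (shm c) (Ef c) fw" "BAD j (shm c) (Ef c) fw"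
  shows "BAD j (shm (do_act a b c)) (Ef (do_act a b c)) (fwstep (shm (do_act a b c)) fw)"
proof -
  have fw: "inv_fw (shm c) (Ef c) fw" using assms(2) by (simp add: Ainv_def)
  note T = trans_E[OF assms(1), of a b]
  show ?thesis
  proof (cases "isflip a c")
    case True
    then have e: "shm (do_act a b c) = shm c" "Ef (do_act a b c) = flipE (Ef c) b" using T by simp_all
    have "pc (Ef c 0) = Flip" using True Ef0_flip[OF True] by (simp add: isflip_def)
    then show ?thesis using assms(3) e fwstep_id[OF fw] unfolding BAD_def by simp
  next
    case False
    then have "(shm (do_act a b c) = shm c \<and> Ef (do_act a b c) = Ef c) \<or>
     (\<exists>i q. cur_op i (Ef c i) = Some q \<and> (shm (do_act a b c), Ef (do_act a b c)) = applyE (shm c) (Ef c) i q)"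
      using T by simp
    then show ?thesis
    proof
      assume "shm (do_act a b c) = shm c \<and> Ef (do_act a b c) = Ef c"
      then show ?thesis using assms(3) fwstep_id[OF fw] by simp
    next
      assume "\<exists>i q. cur_op i (Ef c i) = Some q \<and> (shm (do_act a b c), Ef (do_act a b c)) = applyE (shm c) (Ef c) i q"
      then obtain i q where "cur_op i (Ef c i) = Some q" "applyE (shm c) (Ef c) i q = (shm (do_act a b c), Ef (do_act a b c))"
        by metis
      then show ?thesis using BAD_apply[OF assms(2) _ _ assms(3)] by blast
    qed
  qed
qed

abbreviation BADt where
  "BADt A \<omega> j t \<equiv> BAD j (shm (config A \<omega> t)) (Ef (config A \<omega> t)) (fwt A \<omega> t)"

lemma BAD_persist: "t \<le> t' \<Longrightarrow> BADt A \<omega> j t \<Longrightarrow> BADt A \<omega> j t'"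
proof (induction t' rule: dec_induct)
  case base then show ?case by simp
next
  case (step t')
  then show ?case using BAD_step[of "config A \<omega> t'"] inv_all[of A \<omega> t']
    by (simp add: config_Suc fwt_Suc)
qed

lemma wrong_flip_BAD:
  assumes fl: "isflip (sched A \<omega> t) (config A \<omega> t)"
    and wr: "\<omega> !! t \<noteq> (fwt A \<omega> t (rnd (loc (config A \<omega> t) 0)) = Some 1)"
  shows "BADt A \<omega> (rnd (loc (config A \<omega> t) 0)) (Suc t)"
proof -
  let ?c = "config A \<omega> t"
  let ?j = "rnd (loc ?c 0)"
  have I: "WF ?c" "Ainv (shm ?c) (Ef ?c) (fwt A \<omega> t)" using inv_all by blast+
  note T = trans_E[OF I(1), of "sched A \<omega> t" "\<omega> !! t"]
  have e: "shm (config A \<omega> (Suc t)) = shm ?c" "Ef (config A \<omega> (Suc t)) = flipE (Ef ?c) (\<omega> !! t)"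
    using T fl by (simp_all add: config_Suc)
  have E0: "Ef ?c 0 = loc ?c 0" by (rule Ef0_flip[OF fl])
  have pcf: "pc (loc ?c 0) = Flip" using fl by (simp add: isflip_def)
  have fw: "inv_fw (shm ?c) (Ef ?c) (fwt A \<omega> t)" using I(2) by (simp add: Ainv_def)
  have fwS: "fwt A \<omega> (Suc t) = fwt A \<omega> t" using fwt_Suc[of A \<omega> t] e(1) fwstep_id[OF fw] by simp
  have "ww (Ef ?c) 0 ?j" using E0 pcf by (simp add: ww_def)
  then have nn: "fwt A \<omega> t ?j \<noteq> None" using fw_notnone[OF I(2)] by blast
  have v: "fwt A \<omega> t ?j = Some 0 \<or> fwt A \<omega> t ?j = Some 1" using fw_vals[OF fw, of ?j] nn by simp
  show ?thesis unfolding BAD_def e fwS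
    using E0 v wr by (auto simp: flipE_def)
qed

lemma rnd_after: "rnd s \<le> rnd (after i s r)"
  by (auto simp: after_def split: pcv.splits rres.splits)

lemma rnd_eff: "rnd s \<le> rnd (eff i s)"
  using rnd_after[of "s\<lparr>pend := None\<rparr>" i]
  by (auto simp: eff_def split: option.splits)

lemma link:
  assumes k: "k \<le> rnd (loc (config A \<omega> t) i)"
  shows "\<omega> \<in> Wg (GA A) k t"
proof -
  let ?c = "config A \<omega> t"
  let ?P = "Ef ?c"
  let ?m = "shm ?c"
  have I: "Ainv ?m ?P (fwt A \<omega> t)" using inv_all by blast
  have kP: "k \<le> rnd (?P i)" using k rnd_eff[of "loc ?c i" i] by (simp add: Ef_def)
  have pj: "passed ?m ?P j" if "j < k" for j
    using that kP unfolding passed_def by (meson less_le_trans)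
  have cg: "k \<le> cgs (GA A) \<omega> t"
  proof (cases k)
    case 0 then show ?thesis by simp
  next
    case (Suc j)
    have "passed ?m ?P j" using pj Suc by simp
    then have f: "fwt A \<omega> t j = Some (c1 ?m j)" using I by (simp add: Ainv_def inv_pass_def)
    have "inv_fw ?m ?P (fwt A \<omega> t)" using I by (simp add: Ainv_def)
    from fw_vals[OF this, of j] f have "c1 ?m j \<noteq> -1" by auto
    then have "j < rnd (?P 0) \<or> (j = rnd (?P 0) \<and> (pc (?P 0) = RR2 \<or> pc (?P 0) = Ret))"
      using I by (simp add: Ainv_def inv_c1_def)
    then have "k \<le> flips (?P 0)" using Suc by (auto simp: flips_def)
    then show ?thesis by (simp add: cgs_flips)
  qed
  have ok: "okgs (GA A) k \<omega> t"
    unfolding okgs_iff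
  proof (intro allI impI)
    fix m assume mt: "m < t" and cm: "cgs (GA A) \<omega> m < k"
    show "case GA A (stake m \<omega>) of None \<Rightarrow> True | Some b \<Rightarrow> \<omega> !! m = b"
    proof (cases "isflip (sched A \<omega> m) (config A \<omega> m)")
      case False then show ?thesis by (simp add: GA_stake)
    next
      case True
      let ?jm = "rnd (loc (config A \<omega> m) 0)"
      have "cgs (GA A) \<omega> m = ?jm"
        using True Ef0_flip[OF True] by (simp add: cgs_flips flips_def isflip_def)
      then have jk: "?jm < k" using cm by simp
      show ?thesis
      proof (rule ccontr)
        assume "\<not> ?thesis"
        then have "\<omega> !! m \<noteq> (fwt A \<omega> m ?jm = Some 1)" using True by (simp add: GA_stake)
        then have "BADt A \<omega> ?jm (Suc m)" using wrong_flip_BAD[OF True] by simp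
        then have "BADt A \<omega> ?jm t" using BAD_persist[of "Suc m" t] mt by simp
        then have "\<not> passed ?m ?P ?jm" using BAD_not_passed[OF I] by blast
        then show False using pj[OF jk] by simp
      qed
    qed
  qed
  show ?thesis using cg ok by (simp add: Wg_def)
qed

fun rank :: "pcv \<Rightarrow> nat" where
  "rank W1 = 0" | "rank Flip = 1" | "rank WC = 2" | "rank RR2 = 3"
| "rank RU1 = 0" | "rank RU2 = 1" | "rank RC = 2" | "rank WR2 = 3" | "rank Ret = 4"

definition prank :: "(rop \<times> rres option) option \<Rightarrow> nat" where
  "prank p = (case p of None \<Rightarrow> 0 | Some (q, None) \<Rightarrow> 1 | Some (q, Some r) \<Rightarrow> 2)"

definition mu :: "lstate \<Rightarrow> nat" where
  "mu s = 15 * rnd s + 3 * rank (pc s) + prank (pend s)"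

lemma rank_le: "rank p \<le> 4" by (cases p) auto

lemma mu_le: "mu s \<le> 15 * rnd s + 14"
  using rank_le[of "pc s"] by (auto simp: mu_def prank_def split: option.splits)

lemma after_prog:
  assumes "cur_op i s = Some q" "r = snd (apply_op m q)"
  shows "15 * rnd s + 3 * rank (pc s) + 3 \<le> 15 * rnd (after i s r) + 3 * rank (pc (after i s r))"
  using assms by (cases "pc s"; cases q) (auto simp: cur_op_def after_def)

lemma mu_step:
  assumes "WF c"
  shows "mu (loc c j) \<le> mu (loc (do_act a b c) j) \<and>
    (a = Step j \<and> pc (loc c j) \<noteq> Ret \<longrightarrow> mu (loc c j) < mu (loc (do_act a b c) j))"
proof (cases "j = act_proc a")
  case False
  then have "loc (do_act a b c) j = loc c j"
    by (cases a) (auto simp: do_act_def proc_step_def lin_step_def Let_def split: option.splits prod.splits)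
  then show ?thesis using False by auto
next
  case True
  let ?s = "loc c j"
  have w: "wfp j ?s" using assms by (simp add: WF_def)
  show ?thesis
  proof (cases a)
    case (Step i)
    then have ij: "i = j" using True by simp
    show ?thesis
    proof (cases "pend ?s")
      case None
      show ?thesis
      proof (cases "pc ?s = Flip")
        case True
        then show ?thesis using None Step ij by (simp add: do_act_def proc_step_def mu_def prank_def)
      next
        case False
        show ?thesis
        proof (cases "cur_op j ?s")
          case None2: None
          then have "pc ?s = Ret" using False cur_op_None by blast
          then show ?thesis using None None2 Step ij by (simp add: do_act_def proc_step_def)
        next
          case (Some q)
          then show ?thesis using None False Step ij by (simp add: do_act_def proc_step_def mu_def prank_def)
        qed
      qed
    next
      case (Some p)
      obtain q x where p: "p = (q, x)" by (cases p)
      have cq: "cur_op j ?s = Some q" using w Some p by (simp add: wfp_def)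
      show ?thesis
      proof (cases x)
        case None
        let ?r = "snd (apply_op (shm c) q)"
        have "loc (do_act a b c) j = after j (?s\<lparr>pend := None\<rparr>) ?r"
          using Some p None Step ij by (simp add: do_act_def proc_step_def Let_def split: prod.splits)
        moreover have "15 * rnd ?s + 3 * rank (pc ?s) + 3 \<le> 15 * rnd (after j ?s ?r) + 3 * rank (pc (after j ?s ?r))"
          by (rule after_prog[OF cq refl])
        ultimately show ?thesis using Some p None Step ij by (simp add: mu_def prank_def)
      next
        case (Some r)
        then obtain m where r: "r = snd (apply_op m q)" using w \<open>pend ?s = Some p\<close> p by (auto simp: wfp_def)
        have "loc (do_act a b c) j = after j (?s\<lparr>pend := None\<rparr>) r"
          using \<open>pend ?s = Some p\<close> p Some Step ij by (simp add: do_act_def proc_step_def)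
        moreover have "15 * rnd ?s + 3 * rank (pc ?s) + 3 \<le> 15 * rnd (after j ?s r) + 3 * rank (pc (after j ?s r))"
          by (rule after_prog[OF cq r])
        ultimately show ?thesis using \<open>pend ?s = Some p\<close> p Some Step ij by (simp add: mu_def prank_def)
      qed
    qed
  next
    case (Lin i)
    then have ij: "i = j" using True by simp
    show ?thesis
    proof (cases "\<exists>q. pend ?s = Some (q, None)")
      case True
      then obtain q where q: "pend ?s = Some (q, None)" by blast
      then show ?thesis using Lin ij
        by (simp add: do_act_def lin_step_def Let_def mu_def prank_def split: prod.splits)
    next
      case False
      then have "lin_step i c = c" using ij by (auto simp: lin_step_def split: option.splits)
      then show ?thesis using Lin by (simp add: do_act_def)
    qed
  qed
qed

lemma mu_count:
  assumes nr: "\<forall>t. pc (loc (config A \<omega> t) i) \<noteq> Ret"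
  shows "card {t'. t' < t \<and> sched A \<omega> t' = Step i} \<le> mu (loc (config A \<omega> t) i)"
proof (induction t)
  case 0
  then show ?case by simp
next
  case (Suc t)
  have W: "WF (config A \<omega> t)" using inv_all by blast
  note M = mu_step[OF W, of i "sched A \<omega> t" "\<omega> !! t"]
  show ?case
  proof (cases "sched A \<omega> t = Step i")
    case True
    have "{t'. t' < Suc t \<and> sched A \<omega> t' = Step i} = insert t {t'. t' < t \<and> sched A \<omega> t' = Step i}"
      using True by auto
    then have "card {t'. t' < Suc t \<and> sched A \<omega> t' = Step i} = Suc (card {t'. t' < t \<and> sched A \<omega> t' = Step i})"
      by simp
    then show ?thesis using Suc M True nr by (simp add: config_Suc)
  next
    case False
    have "{t'. t' < Suc t \<and> sched A \<omega> t' = Step i} = {t'. t' < t \<and> sched A \<omega> t' = Step i}"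
      using False less_Suc_eq by auto
    then show ?thesis using Suc M by (simp add: config_Suc)
  qed
qed

lemma term_lemma:
  assumes R: "\<forall>t. rnd (loc (config A \<omega> t) i) \<le> R" and c: "correct A \<omega> i"
  shows "returned A \<omega> i"
proof (rule ccontr)
  assume "\<not> returned A \<omega> i"
  then have nr: "\<forall>t. pc (loc (config A \<omega> t) i) \<noteq> Ret" by (simp add: returned_def)
  have inf: "infinite {t. sched A \<omega> t = Step i}" using c by (simp add: correct_def INFM_iff_infinite)
  obtain F where F: "F \<subseteq> {t. sched A \<omega> t = Step i}" "finite F" "card F = 15 * R + 15"
    using infinite_arbitrarily_large[OF inf] by blast
  let ?t = "Suc (Max F)"
  have "F \<subseteq> {t'. t' < ?t \<and> sched A \<omega> t' = Step i}"
    using F by (auto simp: le_imp_less_Suc)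
  then have "card F \<le> card {t'. t' < ?t \<and> sched A \<omega> t' = Step i}"
    by (rule card_mono[rotated]) auto
  also have "\<dots> \<le> mu (loc (config A \<omega> ?t) i)" by (rule mu_count[OF nr])
  also have "\<dots> \<le> 15 * rnd (loc (config A \<omega> ?t) i) + 14" by (rule mu_le)
  also have "\<dots> \<le> 15 * R + 14" using R by simp
  finally show False using F by simp
qed

definition UU :: "adversary \<Rightarrow> nat \<Rightarrow> bool stream set" where
  "UU A k = (\<Union>t. Wg (GA A) k t)"

definition gg :: "adversary \<Rightarrow> bool stream \<Rightarrow> ennreal" where
  "gg A \<omega> = (\<Sum>k. indicator (UU A k) \<omega>)"

lemma gg_meas: "gg A \<in> borel_measurable coins"
proof -
  have "\<And>k. (\<lambda>\<omega>. indicator (UU A k) \<omega> :: ennreal) \<in> borel_measurable coins"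
    using UWg_sets by (auto simp: UU_def)
  then show ?thesis unfolding gg_def by (rule borel_measurable_suminf_order)
qed

lemma geo2: "(\<Sum>k. (1/2::ennreal) ^ k) = 2"
proof -
  have e: "(1/2::ennreal) ^ k = ennreal ((1/2) ^ k)" for k
  proof -
    have "(1/2::ennreal) = ennreal (1/2)" by (subst ennreal_divide_numeral[symmetric]) simp_all
    then show ?thesis by (simp only:) (rule ennreal_power, simp)
  qed
  have "(\<Sum>k. ennreal ((1/2::real) ^ k)) = ennreal (\<Sum>k. (1/2::real) ^ k)"
    by (rule suminf_ennreal2) (auto intro: summable_geometric)
  also have "(\<Sum>k. (1/2::real) ^ k) = 2" using suminf_geometric[of "1/2::real"] by simp
  finally show ?thesis unfolding e by simp
qed

lemma gg_int: "(\<integral>\<^sup>+\<omega>. gg A \<omega> \<partial>coins) \<le> 2"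
proof -
  have "(\<integral>\<^sup>+\<omega>. gg A \<omega> \<partial>coins) = (\<Sum>k. \<integral>\<^sup>+\<omega>. indicator (UU A k) \<omega> \<partial>coins)"
    unfolding gg_def using UWg_sets by (intro nn_integral_suminf) (auto simp: UU_def)
  also have "\<dots> = (\<Sum>k. emeasure coins (UU A k))"
    using UWg_sets by (simp add: UU_def)
  also have "\<dots> \<le> (\<Sum>k. (1/2::ennreal) ^ k)"
    by (intro suminf_le) (auto simp: UU_def UWg_bound)
  also have "\<dots> = 2" by (rule geo2)
  finally show ?thesis .
qed

lemma rounds_le: "rounds n A \<omega> \<le> gg A \<omega>"
  unfolding rounds_def
proof (intro SUP_least)
  fix t i assume "i \<in> {..<n}"
  let ?r = "rnd (loc (config A \<omega> t) i)"
  have "\<And>k. k \<in> {..<Suc ?r} \<Longrightarrow> indicator (UU A k) \<omega> = (1::ennreal)"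
  proof -
    fix k assume "k \<in> {..<Suc ?r}"
    then have "\<omega> \<in> Wg (GA A) k t" by (intro link[where i=i]) simp
    then have "\<omega> \<in> UU A k" unfolding UU_def by blast
    then show "indicator (UU A k) \<omega> = (1::ennreal)" by simp
  qed
  then have "(\<Sum>k\<in>{..<Suc ?r}. indicator (UU A k) \<omega>) = (\<Sum>k\<in>{..<Suc ?r}. (1::ennreal))"
    by (rule sum.cong[OF refl])
  also have "\<dots> = ennreal (real (Suc ?r))"
    by (simp add: ennreal_of_nat_eq_real_of_nat)
  finally have "ennreal (real (Suc ?r)) = (\<Sum>k\<in>{..<Suc ?r}. indicator (UU A k) \<omega>)" by simp
  also have "\<dots> \<le> gg A \<omega>" unfolding gg_def by (rule sum_le_suminf) auto
  finally show "ennreal (real (Suc ?r)) \<le> gg A \<omega>" .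
qed

theorem theorem2:
  fixes n :: nat and A :: adversary
  assumes "n \<ge> 3"
    and "\<forall>h. act_proc (A h) < n"
  shows "(AE \<omega> in coins. \<forall>i<n. correct A \<omega> i \<longrightarrow> returned A \<omega> i)
         \<and> (\<integral>\<^sup>+ \<omega>. rounds n A \<omega> \<partial>coins) \<le> 2"
proof
  have "AE \<omega> in coins. gg A \<omega> \<noteq> \<infinity>"
  proof (intro nn_integral_PInf_AE gg_meas)
    have "(2::ennreal) < \<infinity>" by simp
    with gg_int[of A] have "integral\<^sup>N coins (gg A) < \<infinity>" by (rule le_less_trans)
    then show "integral\<^sup>N coins (gg A) \<noteq> \<infinity>" by simp
  qed
  then show "AE \<omega> in coins. \<forall>i<n. correct A \<omega> i \<longrightarrow> returned A \<omega> i"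
  proof (rule eventually_mono)
    fix \<omega> assume fin: "gg A \<omega> \<noteq> \<infinity>"
    obtain r where r: "gg A \<omega> = ennreal r" "0 \<le> r" using fin by (cases "gg A \<omega>") auto
    show "\<forall>i<n. correct A \<omega> i \<longrightarrow> returned A \<omega> i"
    proof (intro allI impI)
      fix i assume i: "i < n" and c: "correct A \<omega> i"
      have "\<forall>t. rnd (loc (config A \<omega> t) i) \<le> nat (ceiling r)"
      proof
        fix t
        have "ennreal (real (Suc (rnd (loc (config A \<omega> t) i)))) \<le>
            (SUP i\<in>{..<n}. ennreal (real (Suc (rnd (loc (config A \<omega> t) i)))))"
          by (rule SUP_upper) (simp add: i)
        also have "\<dots> \<le> rounds n A \<omega>" unfolding rounds_def by (rule SUP_upper) simp
        also have "\<dots> \<le> ennreal r" using rounds_le[of n A \<omega>] r(1) by simp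
        finally have "real (Suc (rnd (loc (config A \<omega> t) i))) \<le> r"
          using ennreal_le_iff[OF r(2)] by blast
        then show "rnd (loc (config A \<omega> t) i) \<le> nat (ceiling r)" by linarith
      qed
      then show "returned A \<omega> i" using term_lemma c by blast
    qed
  qed
next
  have "(\<integral>\<^sup>+ \<omega>. rounds n A \<omega> \<partial>coins) \<le> (\<integral>\<^sup>+ \<omega>. gg A \<omega> \<partial>coins)"
    by (intro nn_integral_mono rounds_le)
  also have "\<dots> \<le> 2" by (rule gg_int)
  finally show "(\<integral>\<^sup>+ \<omega>. rounds n A \<omega> \<partial>coins) \<le> 2" .
qed

end
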